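(* Let $p\in[1,\infty)$, $q\in[1,\infty]$, $c\in\mathbb{R}$, and let $\{A_i\}_{i=1}^\infty$, $A_i$ a $P$-operator on $\Omega_i$, be a sequence with $\sup_i\|A_i\|_{p\to q}<\infty$ converging to a $P$-operator $A$ on $\Omega$ (i.e. $d_M(A_i,A)\to0$). Then: (1) if every $A_i$ is positivity-preserving, then $A$ is positivity-preserving; (2) if every $A_i$ is $c$-regular, then $A$ is $c$-regular.
   Context: A $P$-operator on a probability space $\Omega$ is a linear $A:L^\infty(\Omega)\to L^1(\Omega)$, $v\mapsto vA$, with $\|A\|_{\infty\to1}<\infty$, where $\|A\|_{p\to q}=\sup_{v\in L^\infty}\|vA\|_q/\|v\|_p$. $A$ is positivity-preserving if $v\ge0$ a.e. implies $vA\ge0$ a.e.; $A$ is $c$-regular if $1_\Omega A=c1_\Omega$. $\mathcal{S}_k(A)$ is the set of joint distributions on $\mathbb{R}^{2k}$ of $(v_1,\dots,v_k,v_1A,\dots,v_kA)$ over measurable $v_i:\Omega\to[-1,1]$; $d_M(A,B)=\sum_k2^{-k}d_H(\mathcal{S}_k(A),\mathcal{S}_k(B))$ with $d_H$ the Hausdorff distance induced by the Lévy–Prokhorov metric. *)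

theory Defs
  imports "HOL-Probability.Probability"
begin

definition lp_norm :: "'a measure \<Rightarrow> ennreal \<Rightarrow> ('a \<Rightarrow> real) \<Rightarrow> ennreal" where
  "lp_norm M p f =
     (if p = \<infinity> then esssup M (\<lambda>x. ennreal \<bar>f x\<bar>)
      else (let r = enn2real p; I = (\<integral>\<^sup>+ x. ennreal (\<bar>f x\<bar> powr r) \<partial>M)
            in if I = \<infinity> then \<infinity> else ennreal (enn2real I powr (1 / r))))"

text \<open>Representatives of elements of L^\<infinity>: bounded measurable functions.\<close>
definition bounded_meas :: "'a measure \<Rightarrow> ('a \<Rightarrow> real) \<Rightarrow> bool" where
  "bounded_meas M v \<longleftrightarrow> v \<in> borel_measurable M \<and> (\<exists>C. \<forall>x\<in>space M. \<bar>v x\<bar> \<le> C)"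

text \<open>Operator norm \<open>\<parallel>A\<parallel>_{p\<rightarrow>q} = sup over v in L^\<infinity> of \<parallel>vA\<parallel>_q / \<parallel>v\<parallel>_p\<close>
  (v with \<parallel>v\<parallel>_p = 0, i.e. v = 0 a.e., are omitted; for them vA = 0 a.e.).\<close>
definition op_norm :: "'a measure \<Rightarrow> (('a \<Rightarrow> real) \<Rightarrow> ('a \<Rightarrow> real)) \<Rightarrow> ennreal \<Rightarrow> ennreal \<Rightarrow> ennreal" where
  "op_norm M A p q =
     (SUP v \<in> {v. bounded_meas M v \<and> lp_norm M p v \<noteq> 0}. lp_norm M q (A v) / lp_norm M p v)"

text \<open>A P-operator: a linear map L^\<infinity>(M) \<rightarrow> L^1(M), represented on functions,
  well-defined on a.e.-classes, linear a.e., with finite \<infinity>\<rightarrow>1 norm.\<close>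
definition P_operator :: "'a measure \<Rightarrow> (('a \<Rightarrow> real) \<Rightarrow> ('a \<Rightarrow> real)) \<Rightarrow> bool" where
  "P_operator M A \<longleftrightarrow> prob_space M
     \<and> (\<forall>v. bounded_meas M v \<longrightarrow> integrable M (A v))
     \<and> (\<forall>v w. bounded_meas M v \<longrightarrow> bounded_meas M w \<longrightarrow> (AE x in M. v x = w x)
              \<longrightarrow> (AE x in M. A v x = A w x))
     \<and> (\<forall>v w (a::real) (b::real). bounded_meas M v \<longrightarrow> bounded_meas M w \<longrightarrow>
              (AE x in M. A (\<lambda>y. a * v y + b * w y) x = a * A v x + b * A w x))
     \<and> op_norm M A \<infinity> 1 < \<infinity>"

definition positivity_preserving :: "'a measure \<Rightarrow> (('a \<Rightarrow> real) \<Rightarrow> ('a \<Rightarrow> real)) \<Rightarrow> bool" where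
  "positivity_preserving M A \<longleftrightarrow>
     (\<forall>v. bounded_meas M v \<longrightarrow> (AE x in M. v x \<ge> 0) \<longrightarrow> (AE x in M. A v x \<ge> 0))"

definition c_regular :: "real \<Rightarrow> 'a measure \<Rightarrow> (('a \<Rightarrow> real) \<Rightarrow> ('a \<Rightarrow> real)) \<Rightarrow> bool" where
  "c_regular c M A \<longleftrightarrow> (AE x in M. A (\<lambda>_. 1) x = c)"

section \<open>R^n as extensional functions on {..<n}; Levy--Prokhorov metric\<close>

abbreviation Rn :: "nat \<Rightarrow> (nat \<Rightarrow> real) measure" where
  "Rn n \<equiv> PiM {..<n} (\<lambda>_. borel)"

definition edist :: "nat \<Rightarrow> (nat \<Rightarrow> real) \<Rightarrow> (nat \<Rightarrow> real) \<Rightarrow> real" where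
  "edist n x y = sqrt (\<Sum>i<n. (x i - y i)\<^sup>2)"

definition thick :: "nat \<Rightarrow> real \<Rightarrow> (nat \<Rightarrow> real) set \<Rightarrow> (nat \<Rightarrow> real) set" where
  "thick n e B = {y \<in> space (Rn n). \<exists>x\<in>B. edist n x y < e}"

definition lp_dist :: "nat \<Rightarrow> (nat \<Rightarrow> real) measure \<Rightarrow> (nat \<Rightarrow> real) measure \<Rightarrow> real" where
  "lp_dist n \<mu> \<nu> = Inf {e. e > 0 \<and> (\<forall>B \<in> sets (Rn n).
      measure \<mu> B \<le> measure \<nu> (thick n e B) + e \<and> measure \<nu> B \<le> measure \<mu> (thick n e B) + e)}"

definition hausdorff_lp :: "nat \<Rightarrow> (nat \<Rightarrow> real) measure set \<Rightarrow> (nat \<Rightarrow> real) measure set \<Rightarrow> real" where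
  "hausdorff_lp n X Y = max (SUP \<mu>\<in>X. INF \<nu>\<in>Y. lp_dist n \<mu> \<nu>) (SUP \<nu>\<in>Y. INF \<mu>\<in>X. lp_dist n \<mu> \<nu>)"

text \<open>\<open>S_k(A)\<close>: joint distributions of (v_1..v_k, v_1A..v_kA) on R^{2k}; coordinate j<k is v_{j+1},
  coordinate k+j is v_{j+1}A.\<close>
definition S_k :: "'a measure \<Rightarrow> (('a \<Rightarrow> real) \<Rightarrow> ('a \<Rightarrow> real)) \<Rightarrow> nat \<Rightarrow> (nat \<Rightarrow> real) measure set" where
  "S_k M A k = {distr M (Rn (2 * k))
        (\<lambda>x. \<lambda>j\<in>{..<2 * k}. if j < k then v j x else A (v (j - k)) x)
      | v. \<forall>j<k. v j \<in> borel_measurable M \<and> (\<forall>x\<in>space M. v j x \<in> {-1..1})}"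

definition action_dist :: "'a measure \<Rightarrow> (('a \<Rightarrow> real) \<Rightarrow> ('a \<Rightarrow> real))
    \<Rightarrow> 'b measure \<Rightarrow> (('b \<Rightarrow> real) \<Rightarrow> ('b \<Rightarrow> real)) \<Rightarrow> real" where
  "action_dist M A N B = (\<Sum>k. (1/2) ^ Suc k * hausdorff_lp (2 * Suc k) (S_k M A (Suc k)) (S_k N B (Suc k)))"

end

theory Submission
  imports Defs
begin

lemma markov_lp:
  fixes q :: ennreal and t \<eta> :: real
  assumes q1: "1 \<le> q" and t0: "t > 0" and e0: "\<eta> > 0"
  obtains K where "K > 0" "\<And>(M::'a measure) f. prob_space M \<Longrightarrow> f \<in> borel_measurable M \<Longrightarrow>
      lp_norm M q f \<le> ennreal K \<Longrightarrow> measure M {x\<in>space M. t \<le> \<bar>f x\<bar>} < \<eta>"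
proof (cases "q = \<infinity>")
  case True
  show ?thesis
  proof (rule that[of "t/2"])
    show "t/2 > 0" using t0 by simp
    fix M :: "'a measure" and f
    assume P: "prob_space M" and fm: "f \<in> borel_measurable M" and L: "lp_norm M q f \<le> ennreal (t/2)"
    have "esssup M (\<lambda>x. ennreal \<bar>f x\<bar>) \<le> ennreal (t/2)" using L True by (simp add: lp_norm_def)
    then have "AE x in M. ennreal \<bar>f x\<bar> \<le> ennreal (t/2)"
      using esssup_AE[of "\<lambda>x. ennreal \<bar>f x\<bar>" M] by (auto elim: eventually_mono)
    then have "AE x in M. \<not> t \<le> \<bar>f x\<bar>"
      using t0 by (auto elim!: eventually_mono simp: ennreal_le_iff)
    moreover have S: "{x\<in>space M. t \<le> \<bar>f x\<bar>} \<in> sets M" using fm by measurable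
    ultimately have "emeasure M {x\<in>space M. t \<le> \<bar>f x\<bar>} = 0"
      using AE_iff_measurable[OF S, of "\<lambda>x. \<not> t \<le> \<bar>f x\<bar>"] by simp
    then show "measure M {x\<in>space M. t \<le> \<bar>f x\<bar>} < \<eta>" using e0 by (simp add: measure_def)
  qed
next
  case False
  define s where "s = enn2real q"
  have s1: "1 \<le> s" using q1 False unfolding s_def
    by (cases q rule: ennreal_cases) (auto simp: ennreal_le_iff2)
  show ?thesis
  proof (rule that[of "t * (\<eta>/2) powr (1/s)"])
    show "t * (\<eta>/2) powr (1/s) > 0" using t0 e0 by simp
    fix M :: "'a measure" and f
    assume P: "prob_space M" and fm: "f \<in> borel_measurable M"
      and L: "lp_norm M q f \<le> ennreal (t * (\<eta>/2) powr (1/s))"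
    define I where "I = (\<integral>\<^sup>+ x. ennreal (\<bar>f x\<bar> powr s) \<partial>M)"
    have LI: "lp_norm M q f = (if I = \<infinity> then \<infinity> else ennreal (enn2real I powr (1 / s)))"
      using False by (simp add: lp_norm_def I_def s_def Let_def)
    have Ifin: "I \<noteq> \<infinity>"
    proof
      assume "I = \<infinity>"
      then have "\<infinity> \<le> ennreal (t * (\<eta>/2) powr (1/s))" using L LI by simp
      then show False using ennreal_less_top[of "t * (\<eta>/2) powr (1/s)"] by (simp add: not_le[symmetric])
    qed
    have "enn2real I powr (1/s) \<le> t * (\<eta>/2) powr (1/s)"
      using L LI Ifin t0 e0 by (simp add: ennreal_le_iff)
    then have "(enn2real I powr (1/s)) powr s \<le> (t * (\<eta>/2) powr (1/s)) powr s"
      using s1 by (intro powr_mono2) auto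
    also have "(enn2real I powr (1/s)) powr s = enn2real I"
      using s1 by (simp add: powr_powr)
    also have "(t * (\<eta>/2) powr (1/s)) powr s = t powr s * (\<eta>/2)"
      using s1 t0 e0 by (simp add: powr_mult powr_powr)
    finally have Ib: "enn2real I \<le> t powr s * (\<eta>/2)" .
    define S where "S = {x\<in>space M. t \<le> \<bar>f x\<bar>}"
    have Sm: "S \<in> sets M" using fm unfolding S_def by measurable
    have "ennreal (t powr s) * emeasure M S = (\<integral>\<^sup>+ x. ennreal (t powr s) * indicator S x \<partial>M)"
      using Sm by (simp add: nn_integral_cmult_indicator)
    also have "\<dots> \<le> I" unfolding I_def
    proof (rule nn_integral_mono)
      fix x assume "x \<in> space M"
      show "ennreal (t powr s) * indicator S x \<le> ennreal (\<bar>f x\<bar> powr s)"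
        using t0 s1 by (auto simp: S_def indicator_def intro!: ennreal_leI powr_mono2)
    qed
    finally have "ennreal (t powr s) * emeasure M S \<le> I" .
    then have "ennreal (t powr s * measure M S) \<le> ennreal (enn2real I)"
      using Ifin finite_measure.emeasure_eq_measure[OF prob_space.finite_measure[OF P]] by (simp add: ennreal_mult ennreal_enn2real_if)
    then have "t powr s * measure M S \<le> enn2real I"
      by (subst (asm) ennreal_le_iff) auto
    with Ib have "t powr s * measure M S \<le> t powr s * (\<eta>/2)" by simp
    then have "measure M S \<le> \<eta>/2" using t0 by simp
    then show "measure M {x\<in>space M. t \<le> \<bar>f x\<bar>} < \<eta>" using e0 by (simp add: S_def)
  qed
qed


lemma lp_small:
  fixes p :: ennreal
  assumes p1: "1 \<le> p" and pf: "p < \<infinity>" and P: "prob_space M" and gm: "g \<in> borel_measurable M"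
    and gb: "\<forall>x\<in>space M. \<bar>g x\<bar> \<le> 2" and a0: "a > 0" and b0: "b \<ge> 0"
    and mS: "measure M {x\<in>space M. a < \<bar>g x\<bar>} \<le> b"
  shows "lp_norm M p g \<le> ennreal ((a powr enn2real p + 2 powr enn2real p * b) powr (1 / enn2real p))"
    and "lp_norm M p g < \<infinity>"
proof -
  interpret P: prob_space M by (rule P)
  define r where "r = enn2real p"
  have r1: "1 \<le> r" using p1 pf unfolding r_def
    by (cases p rule: ennreal_cases) (auto simp: ennreal_le_iff2)
  define I where "I = (\<integral>\<^sup>+ x. ennreal (\<bar>g x\<bar> powr r) \<partial>M)"
  have LI: "lp_norm M p g = (if I = \<infinity> then \<infinity> else ennreal (enn2real I powr (1 / r)))"
    using pf by (simp add: lp_norm_def I_def r_def Let_def)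
  define S where "S = {x\<in>space M. a < \<bar>g x\<bar>}"
  have Sm: "S \<in> sets M" using gm unfolding S_def by measurable
  have "I \<le> (\<integral>\<^sup>+ x. ennreal (a powr r) + ennreal (2 powr r) * indicator S x \<partial>M)"
    unfolding I_def
  proof (rule nn_integral_mono)
    fix x assume x: "x \<in> space M"
    show "ennreal (\<bar>g x\<bar> powr r) \<le> ennreal (a powr r) + ennreal (2 powr r) * indicator S x"
    proof (cases "x \<in> S")
      case True
      have "\<bar>g x\<bar> powr r \<le> 2 powr r" using gb x r1 by (intro powr_mono2) auto
      also have "\<dots> \<le> a powr r + 2 powr r" by simp
      finally show ?thesis using True by (simp add: ennreal_plus[symmetric] del: ennreal_plus)
    next
      case False
      then have "\<bar>g x\<bar> \<le> a" using x by (auto simp: S_def)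
      then have "\<bar>g x\<bar> powr r \<le> a powr r" using r1 by (intro powr_mono2) auto
      then show ?thesis using False by (simp add: ennreal_leI)
    qed
  qed
  also have "\<dots> = ennreal (a powr r) * emeasure M (space M) + ennreal (2 powr r) * emeasure M S"
    using Sm by (subst nn_integral_add) (auto simp: nn_integral_cmult_indicator)
  also have "\<dots> = ennreal (a powr r + 2 powr r * measure M S)"
    by (simp add: P.emeasure_eq_measure P.prob_space ennreal_mult)
  also have "\<dots> \<le> ennreal (a powr r + 2 powr r * b)"
    using mS by (intro ennreal_leI) (simp add: S_def)
  finally have Ib: "I \<le> ennreal (a powr r + 2 powr r * b)" .
  have Ifin: "I < \<infinity>" using le_less_trans[OF Ib ennreal_less_top] by simp
  then have Ifin': "I \<noteq> \<infinity>" by simp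
  have "enn2real I \<le> enn2real (ennreal (a powr r + 2 powr r * b))"
    using Ib by (rule enn2real_mono) simp
  moreover have "0 \<le> a powr r + 2 powr r * b" using b0 by simp
  ultimately have "enn2real I \<le> a powr r + 2 powr r * b" by (simp del: ennreal_plus)
  then have "enn2real I powr (1/r) \<le> (a powr r + 2 powr r * b) powr (1/r)"
    using r1 by (intro powr_mono2) auto
  then show "lp_norm M p g \<le> ennreal ((a powr enn2real p + 2 powr enn2real p * b) powr (1 / enn2real p))"
    using LI Ifin' by (simp add: r_def ennreal_leI)
  show "lp_norm M p g < \<infinity>" using LI Ifin' by simp
qed

lemma small_real:
  fixes r K :: real
  assumes r1: "1 \<le> r" and K0: "K > 0"
  obtains \<epsilon> where "\<epsilon> > 0" "\<And>a b. 0 < a \<Longrightarrow> a \<le> \<epsilon> \<Longrightarrow> 0 \<le> b \<Longrightarrow> b \<le> \<epsilon> \<Longrightarrow>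
     (a powr r + 2 powr r * b) powr (1/r) \<le> K"
proof -
  define \<epsilon> where "\<epsilon> = min 1 (K powr r / (1 + 2 powr r))"
  have d0: "0 < 1 + 2 powr r" by (simp add: add_pos_pos)
  have e0: "\<epsilon> > 0" using K0 d0 by (simp add: \<epsilon>_def)
  show ?thesis
  proof (rule that[OF e0])
    fix a b :: real assume a: "0 < a" "a \<le> \<epsilon>" and b: "0 \<le> b" "b \<le> \<epsilon>"
    have "a powr r \<le> a powr 1" using a r1 by (intro powr_mono') (auto simp: \<epsilon>_def)
    then have ar: "a powr r \<le> \<epsilon>" using a by simp
    have "a powr r + 2 powr r * b \<le> \<epsilon> + 2 powr r * \<epsilon>"
      using ar b by (intro add_mono mult_left_mono) auto
    also have "\<dots> = (1 + 2 powr r) * \<epsilon>" by (simp add: algebra_simps)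
    also have "\<dots> \<le> (1 + 2 powr r) * (K powr r / (1 + 2 powr r))"
      by (intro mult_left_mono) (use d0 in \<open>auto simp: \<epsilon>_def\<close>)
    also have "\<dots> = K powr r" using d0 by simp
    finally have "(a powr r + 2 powr r * b) powr (1/r) \<le> (K powr r) powr (1/r)"
      using a b r1 by (intro powr_mono2) auto
    also have "\<dots> = K" using K0 r1 by (simp add: powr_powr)
    finally show "(a powr r + 2 powr r * b) powr (1/r) \<le> K" .
  qed
qed


lemma Pop_prob: "P_operator M A \<Longrightarrow> prob_space M"
  by (simp add: P_operator_def)

lemma Pop_meas: "P_operator M A \<Longrightarrow> bounded_meas M v \<Longrightarrow> A v \<in> borel_measurable M"
  by (auto simp: P_operator_def)

lemma Pop_lin: "P_operator M A \<Longrightarrow> bounded_meas M v \<Longrightarrow> bounded_meas M w \<Longrightarrow>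
    AE x in M. A (\<lambda>y. a * v y + b * w y) x = a * A v x + b * A w x"
  by (auto simp: P_operator_def)

lemma Pop_wd: "P_operator M A \<Longrightarrow> bounded_meas M v \<Longrightarrow> bounded_meas M w \<Longrightarrow>
    AE x in M. v x = w x \<Longrightarrow> AE x in M. A v x = A w x"
  by (auto simp: P_operator_def)

lemma bounded_meas_const: "bounded_meas M (\<lambda>_. c)"
  by (auto simp: bounded_meas_def)

lemma Pop_zero:
  assumes P: "P_operator M A" and v: "bounded_meas M v" and z: "AE x in M. v x = 0"
  shows "AE x in M. A v x = 0"
proof -
  have "AE x in M. A v x = A (\<lambda>_. 0) x"
    using Pop_wd[OF P v bounded_meas_const z] .
  moreover have "AE x in M. A (\<lambda>y. 0 * (0::real) + 0 * 0) x = 0 * A (\<lambda>_. 0) x + 0 * A (\<lambda>_. 0) x"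
    by (rule Pop_lin[OF P bounded_meas_const bounded_meas_const])
  ultimately show ?thesis by eventually_elim simp
qed

lemma lp_zero_AE:
  fixes p :: ennreal
  assumes pf: "p < \<infinity>" and p1: "1 \<le> p" and gm: "g \<in> borel_measurable M" and L: "lp_norm M p g = 0"
  shows "AE x in M. g x = 0"
proof -
  define r where "r = enn2real p"
  have r1: "1 \<le> r" using p1 pf unfolding r_def
    by (cases p rule: ennreal_cases) (auto simp: ennreal_le_iff2)
  define I where "I = (\<integral>\<^sup>+ x. ennreal (\<bar>g x\<bar> powr r) \<partial>M)"
  have pn: "p \<noteq> \<infinity>" using pf by simp
  have LI: "lp_norm M p g = (if I = \<infinity> then \<infinity> else ennreal (enn2real I powr (1 / r)))"
    using pn by (simp add: lp_norm_def I_def r_def Let_def)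
  have If: "I \<noteq> \<infinity>" using L LI by (auto split: if_splits)
  then have "ennreal (enn2real I powr (1 / r)) = 0" using L LI by simp
  then have "enn2real I powr (1 / r) = 0"
    by (metis ennreal_eq_0_iff order_antisym powr_ge_zero)
  then have "enn2real I = 0" by simp
  then have "I = 0" using If by (simp add: enn2real_eq_0_iff)
  then have "AE x in M. ennreal (\<bar>g x\<bar> powr r) = 0"
    unfolding I_def by (subst (asm) nn_integral_0_iff_AE) (use gm in measurable)
  then show ?thesis by eventually_elim (simp add: ennreal_eq_0_iff)
qed

lemma key:
  fixes p q :: ennreal and t \<eta> C :: real
  assumes p1: "1 \<le> p" and pf: "p < \<infinity>" and q1: "1 \<le> q" and t0: "t > 0" and e0: "\<eta> > 0" and C0: "C > 0"
  obtains \<epsilon> where "\<epsilon> > 0" "\<And>(M::'a measure) A g. P_operator M A \<Longrightarrow> op_norm M A p q \<le> ennreal C \<Longrightarrow>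
     g \<in> borel_measurable M \<Longrightarrow> (\<forall>x\<in>space M. \<bar>g x\<bar> \<le> 2) \<Longrightarrow>
     measure M {x\<in>space M. \<epsilon> < \<bar>g x\<bar>} \<le> \<epsilon> \<Longrightarrow> measure M {x\<in>space M. t \<le> \<bar>A g x\<bar>} < \<eta>"
proof -
  obtain K where K0: "K > 0" and KM: "\<And>(M::'a measure) f. prob_space M \<Longrightarrow> f \<in> borel_measurable M \<Longrightarrow>
      lp_norm M q f \<le> ennreal K \<Longrightarrow> measure M {x\<in>space M. t \<le> \<bar>f x\<bar>} < \<eta>"
    using markov_lp[OF q1 t0 e0] by blast
  have r1: "1 \<le> enn2real p" using p1 pf
    by (cases p rule: ennreal_cases) (auto simp: ennreal_le_iff2)
  obtain \<epsilon> where eps0: "\<epsilon> > 0" and epsR: "\<And>a b. 0 < a \<Longrightarrow> a \<le> \<epsilon> \<Longrightarrow> 0 \<le> b \<Longrightarrow> b \<le> \<epsilon> \<Longrightarrow>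
     (a powr enn2real p + 2 powr enn2real p * b) powr (1/enn2real p) \<le> K / C"
    using small_real[OF r1, of "K/C"] K0 C0 by auto
  show ?thesis
  proof (rule that[OF eps0])
    fix M :: "'a measure" and A g
    assume P: "P_operator M A" and opn: "op_norm M A p q \<le> ennreal C" and gm: "g \<in> borel_measurable M"
      and gb: "\<forall>x\<in>space M. \<bar>g x\<bar> \<le> 2" and gs: "measure M {x\<in>space M. \<epsilon> < \<bar>g x\<bar>} \<le> \<epsilon>"
    have PS: "prob_space M" using P by (rule Pop_prob)
    interpret PS: prob_space M by (rule PS)
    have gB: "bounded_meas M g" using gm gb by (auto simp: bounded_meas_def)
    have Agm: "A g \<in> borel_measurable M" using Pop_meas[OF P gB] .
    have Lb: "lp_norm M p g \<le> ennreal ((\<epsilon> powr enn2real p + 2 powr enn2real p * \<epsilon>) powr (1 / enn2real p))"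
      and Lf: "lp_norm M p g < \<infinity>"
      using lp_small[OF p1 pf PS gm gb eps0 _ gs] eps0 by auto
    have LK: "lp_norm M p g \<le> ennreal (K / C)"
      using Lb epsR[of \<epsilon> \<epsilon>] eps0 by (auto intro: order_trans ennreal_leI)
    show "measure M {x\<in>space M. t \<le> \<bar>A g x\<bar>} < \<eta>"
    proof (cases "lp_norm M p g = 0")
      case True
      have "AE x in M. g x = 0" using lp_zero_AE[OF pf p1 gm True] .
      then have "AE x in M. A g x = 0" using Pop_zero[OF P gB] by blast
      then have "AE x in M. \<not> t \<le> \<bar>A g x\<bar>" by eventually_elim (use t0 in simp)
      moreover have S: "{x\<in>space M. t \<le> \<bar>A g x\<bar>} \<in> sets M" using Agm by measurable
      ultimately have "emeasure M {x\<in>space M. t \<le> \<bar>A g x\<bar>} = 0"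
        using AE_iff_measurable[OF S, of "\<lambda>x. \<not> t \<le> \<bar>A g x\<bar>"] by simp
      then show ?thesis using e0 by (simp add: measure_def)
    next
      case False
      have "lp_norm M q (A g) / lp_norm M p g \<le> op_norm M A p q"
        unfolding op_norm_def using gB False by (intro SUP_upper) auto
      then have "lp_norm M q (A g) / lp_norm M p g \<le> ennreal C" using opn by (rule order_trans)
      then have "lp_norm M q (A g) / lp_norm M p g * lp_norm M p g \<le> ennreal C * lp_norm M p g"
        by (rule mult_right_mono) simp
      also have "lp_norm M q (A g) / lp_norm M p g * lp_norm M p g = lp_norm M q (A g)"
        using False Lf by (simp add: ennreal_divide_times)
      also have "ennreal C * lp_norm M p g \<le> ennreal C * ennreal (K / C)"
        using LK by (rule mult_left_mono) simp
      also have "\<dots> = ennreal (C * (K / C))" using C0 K0 by (intro ennreal_mult[symmetric]) auto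
      also have "\<dots> = ennreal K" using C0 by simp
      finally show ?thesis using KM[OF PS Agm] by blast
    qed
  qed
qed


definition D :: "'a measure \<Rightarrow> (('a \<Rightarrow> real) \<Rightarrow> ('a \<Rightarrow> real)) \<Rightarrow> ('a \<Rightarrow> real) \<Rightarrow> (nat \<Rightarrow> real) measure" where
  "D M A v = distr M (Rn 2) (\<lambda>x. \<lambda>j\<in>{..<2}. if j < 1 then v x else A v x)"

lemma unit_bounded: "v \<in> borel_measurable M \<Longrightarrow> (\<forall>x\<in>space M. v x \<in> {-1..1}) \<Longrightarrow> bounded_meas M v"
  unfolding bounded_meas_def by (intro conjI exI[of _ 1]) auto

lemma D_in_S:
  assumes "v \<in> borel_measurable M" "\<forall>x\<in>space M. v x \<in> {-1..1}"
  shows "D M A v \<in> S_k M A (Suc 0)"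
  unfolding S_k_def D_def
  by (rule CollectI, rule exI[of _ "\<lambda>_. v"]) (use assms in auto)

lemma S_in_D:
  assumes "\<mu> \<in> S_k M A (Suc 0)"
  obtains v where "v \<in> borel_measurable M" "\<forall>x\<in>space M. v x \<in> {-1..1}" "\<mu> = D M A v"
proof -
  obtain vv where vv: "\<forall>j<Suc 0. vv j \<in> borel_measurable M \<and> (\<forall>x\<in>space M. vv j x \<in> {-1..1})"
    and mu: "\<mu> = distr M (Rn (2 * Suc 0))
        (\<lambda>x. \<lambda>j\<in>{..<2 * Suc 0}. if j < Suc 0 then vv j x else A (vv (j - Suc 0)) x)"
    using assms unfolding S_k_def by blast
  have two: "2 * Suc 0 = (2::nat)" by simp
  have eq: "(\<lambda>x. \<lambda>j\<in>{..<2 * Suc 0}. if j < Suc 0 then vv j x else A (vv (j - Suc 0)) x)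
      = (\<lambda>x. \<lambda>j\<in>{..<2}. if j < 1 then vv 0 x else A (vv 0) x)"
    unfolding two
  proof (rule ext, rule restrict_ext)
    fix x j assume "j \<in> {..<2::nat}"
    then have "j = 0 \<or> j = 1" by auto
    then show "(if j < Suc 0 then vv j x else A (vv (j - Suc 0)) x) = (if j < 1 then vv 0 x else A (vv 0) x)"
      by auto
  qed
  have "\<mu> = D M A (vv 0)" unfolding mu eq D_def by simp
  then show ?thesis
    by (intro that[of "vv 0"]) (use vv in auto)
qed

lemma D_map_meas:
  assumes P: "P_operator M A" and v: "bounded_meas M v"
  shows "(\<lambda>x. \<lambda>j\<in>{..<2::nat}. if j < 1 then v x else A v x) \<in> M \<rightarrow>\<^sub>M Rn 2"
proof (rule measurable_restrict)
  fix j :: nat assume "j \<in> {..<2}"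
  have "v \<in> borel_measurable M" using v by (simp add: bounded_meas_def)
  moreover have "A v \<in> borel_measurable M" using Pop_meas[OF P v] .
  ultimately show "(\<lambda>x. if j < 1 then v x else A v x) \<in> M \<rightarrow>\<^sub>M borel" by simp
qed

lemma D_prob:
  assumes P: "P_operator M A" and v: "bounded_meas M v"
  shows "prob_space (D M A v)"
  unfolding D_def using Pop_prob[OF P] D_map_meas[OF P v]
  by (intro prob_space.prob_space_distr) auto

lemma D_measure:
  assumes P: "P_operator M A" and v: "bounded_meas M v"
    and S: "{z\<in>space (Rn 2). Q (z 0) (z 1)} \<in> sets (Rn 2)"
  shows "measure (D M A v) {z\<in>space (Rn 2). Q (z 0) (z 1)} = measure M {x\<in>space M. Q (v x) (A v x)}"
proof -
  have m: "(\<lambda>x. \<lambda>j\<in>{..<2::nat}. if j < 1 then v x else A v x) \<in> M \<rightarrow>\<^sub>M Rn 2" using D_map_meas[OF P v] .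
  have "measure (D M A v) {z\<in>space (Rn 2). Q (z 0) (z 1)} =
      measure M ((\<lambda>x. \<lambda>j\<in>{..<2::nat}. if j < 1 then v x else A v x) -` {z\<in>space (Rn 2). Q (z 0) (z 1)} \<inter> space M)"
    unfolding D_def by (rule measure_distr[OF m S])
  also have "(\<lambda>x. \<lambda>j\<in>{..<2::nat}. if j < 1 then v x else A v x) -` {z\<in>space (Rn 2). Q (z 0) (z 1)} \<inter> space M
      = {x\<in>space M. Q (v x) (A v x)}"
    using measurable_space[OF m] by auto
  finally show ?thesis .
qed

lemma meas_le_test1: "{z\<in>space (Rn 2). z 0 \<le> (a::real)} \<in> sets (Rn 2)"
  by measurable

lemma meas_le_test2: "{z\<in>space (Rn 2). 0 \<le> z 0 \<and> z 1 \<le> (a::real)} \<in> sets (Rn 2)"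
  by measurable

lemma meas_le_test3: "{z\<in>space (Rn 2). d \<le> \<bar>z 1 - c\<bar>} \<in> sets (Rn 2)"
  by measurable


lemma Sk_prob:
  assumes P: "P_operator M A" and mu: "\<mu> \<in> S_k M A k"
  shows "prob_space \<mu>"
proof -
  obtain v where v: "\<forall>j<k. v j \<in> borel_measurable M \<and> (\<forall>x\<in>space M. v j x \<in> {-1..1})"
    and mueq: "\<mu> = distr M (Rn (2 * k)) (\<lambda>x. \<lambda>j\<in>{..<2 * k}. if j < k then v j x else A (v (j - k)) x)"
    using mu unfolding S_k_def by blast
  have m: "(\<lambda>x. \<lambda>j\<in>{..<2 * k}. if j < k then v j x else A (v (j - k)) x) \<in> M \<rightarrow>\<^sub>M Rn (2 * k)"
  proof (rule measurable_restrict)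
    fix j assume j: "j \<in> {..<2 * k}"
    show "(\<lambda>x. if j < k then v j x else A (v (j - k)) x) \<in> M \<rightarrow>\<^sub>M borel"
    proof (cases "j < k")
      case True then show ?thesis using v by simp
    next
      case False
      then have "j - k < k" using j by auto
      then have "bounded_meas M (v (j - k))" using v unit_bounded by blast
      then show ?thesis using False Pop_meas[OF P] by simp
    qed
  qed
  show ?thesis unfolding mueq using Pop_prob[OF P] m
    by (intro prob_space.prob_space_distr) auto
qed

lemma Sk_nonempty: "S_k M A k \<noteq> {}"
  unfolding S_k_def by (auto intro!: exI[of _ "\<lambda>_ _. 0"])

lemma lp_dist_set_1:
  assumes "prob_space \<mu>" "prob_space \<nu>"
  shows "(1::real) \<in> {e. e > 0 \<and> (\<forall>B \<in> sets (Rn n).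
      measure \<mu> B \<le> measure \<nu> (thick n e B) + e \<and> measure \<nu> B \<le> measure \<mu> (thick n e B) + e)}"
  using prob_space.prob_le_1[OF assms(1)] prob_space.prob_le_1[OF assms(2)]
  by (auto intro: add_nonneg_nonneg order_trans[OF _ add_increasing[OF measure_nonneg order_refl]])

lemma lp_dist_bounds:
  assumes "prob_space \<mu>" "prob_space \<nu>"
  shows "0 \<le> lp_dist n \<mu> \<nu>" "lp_dist n \<mu> \<nu> \<le> 1"
proof -
  note one = lp_dist_set_1[OF assms, of n]
  show "0 \<le> lp_dist n \<mu> \<nu>" unfolding lp_dist_def
    using one by (intro cInf_greatest) (blast, simp)
  show "lp_dist n \<mu> \<nu> \<le> 1" unfolding lp_dist_def
    using one by (intro cInf_lower) (auto intro: bdd_belowI[of _ 0])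
qed

lemma lp_dist_less:
  assumes "prob_space \<mu>" "prob_space \<nu>" "lp_dist n \<mu> \<nu> < \<epsilon>"
  obtains e where "e > 0" "e < \<epsilon>" "\<And>B. B \<in> sets (Rn n) \<Longrightarrow>
      measure \<mu> B \<le> measure \<nu> (thick n e B) + e \<and> measure \<nu> B \<le> measure \<mu> (thick n e B) + e"
proof -
  note one = lp_dist_set_1[OF assms(1,2), of n]
  from cInf_lessD[of _ \<epsilon>, OF _ assms(3)[unfolded lp_dist_def]] one
  show ?thesis using that by blast
qed

lemma hausdorff_bounds:
  fixes d :: "'x \<Rightarrow> 'y \<Rightarrow> real"
  assumes X: "X \<noteq> {}" and Y: "Y \<noteq> {}" and b: "\<And>x y. x \<in> X \<Longrightarrow> y \<in> Y \<Longrightarrow> 0 \<le> d x y \<and> d x y \<le> 1"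
  shows "0 \<le> max (SUP x\<in>X. INF y\<in>Y. d x y) (SUP y\<in>Y. INF x\<in>X. d x y)"
    and "max (SUP x\<in>X. INF y\<in>Y. d x y) (SUP y\<in>Y. INF x\<in>X. d x y) \<le> 1"
proof -
  have i1: "0 \<le> (INF y\<in>Y. d x y) \<and> (INF y\<in>Y. d x y) \<le> 1" if "x \<in> X" for x
  proof
    show "0 \<le> (INF y\<in>Y. d x y)" using Y b that by (intro cINF_greatest) auto
    obtain y where "y \<in> Y" using Y by blast
    then have "(INF y\<in>Y. d x y) \<le> d x y" using b that by (intro cINF_lower) (auto intro: bdd_belowI2[where m=0])
    then show "(INF y\<in>Y. d x y) \<le> 1" using b that \<open>y \<in> Y\<close> by fastforce
  qed
  have i2: "0 \<le> (INF x\<in>X. d x y) \<and> (INF x\<in>X. d x y) \<le> 1" if "y \<in> Y" for y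
  proof
    show "0 \<le> (INF x\<in>X. d x y)" using X b that by (intro cINF_greatest) auto
    obtain x where "x \<in> X" using X by blast
    then have "(INF x\<in>X. d x y) \<le> d x y" using b that by (intro cINF_lower) (auto intro: bdd_belowI2[where m=0])
    then show "(INF x\<in>X. d x y) \<le> 1" using b that \<open>x \<in> X\<close> by fastforce
  qed
  have s1: "(SUP x\<in>X. INF y\<in>Y. d x y) \<le> 1" using X i1 by (intro cSUP_least) auto
  have s2: "(SUP y\<in>Y. INF x\<in>X. d x y) \<le> 1" using Y i2 by (intro cSUP_least) auto
  obtain x0 where x0: "x0 \<in> X" using X by blast
  have "0 \<le> (INF y\<in>Y. d x0 y)" using i1 x0 by blast
  also have "\<dots> \<le> (SUP x\<in>X. INF y\<in>Y. d x y)" using x0 i1 by (intro cSUP_upper) (auto intro: bdd_aboveI2[where M=1])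
  finally show "0 \<le> max (SUP x\<in>X. INF y\<in>Y. d x y) (SUP y\<in>Y. INF x\<in>X. d x y)" by simp
  show "max (SUP x\<in>X. INF y\<in>Y. d x y) (SUP y\<in>Y. INF x\<in>X. d x y) \<le> 1" using s1 s2 by simp
qed

lemma hausdorff_small:
  fixes d :: "'x \<Rightarrow> 'y \<Rightarrow> real"
  assumes X: "X \<noteq> {}" and Y: "Y \<noteq> {}" and b: "\<And>x y. x \<in> X \<Longrightarrow> y \<in> Y \<Longrightarrow> 0 \<le> d x y \<and> d x y \<le> 1"
    and h: "max (SUP x\<in>X. INF y\<in>Y. d x y) (SUP y\<in>Y. INF x\<in>X. d x y) < \<epsilon>" and y0: "y0 \<in> Y"
  shows "\<exists>x\<in>X. d x y0 < \<epsilon>"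
proof -
  have i2: "(INF x\<in>X. d x y) \<le> 1" if "y \<in> Y" for y
  proof -
    obtain x where "x \<in> X" using X by blast
    then have "(INF x\<in>X. d x y) \<le> d x y" using b that by (intro cINF_lower) (auto intro: bdd_belowI2[where m=0])
    then show "(INF x\<in>X. d x y) \<le> 1" using b that \<open>x \<in> X\<close> by fastforce
  qed
  have "(INF x\<in>X. d x y0) \<le> (SUP y\<in>Y. INF x\<in>X. d x y)"
    using y0 i2 by (intro cSUP_upper) (auto intro: bdd_aboveI2[where M=1])
  then have "(INF x\<in>X. d x y0) < \<epsilon>" using h by simp
  then show ?thesis using X b y0 by (subst (asm) cINF_less_iff) (auto intro: bdd_belowI2[where m=0])
qed


lemma action_first:
  assumes P: "P_operator M A" and Q: "P_operator N B"
  shows "hausdorff_lp 2 (S_k M A (Suc 0)) (S_k N B (Suc 0)) \<le> 2 * action_dist M A N B"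
proof -
  define h where "h k = hausdorff_lp (2 * Suc k) (S_k M A (Suc k)) (S_k N B (Suc k))" for k
  have hb: "0 \<le> h k \<and> h k \<le> 1" for k
  proof -
    have b: "\<And>x y. x \<in> S_k M A (Suc k) \<Longrightarrow> y \<in> S_k N B (Suc k) \<Longrightarrow>
        0 \<le> lp_dist (2 * Suc k) x y \<and> lp_dist (2 * Suc k) x y \<le> 1"
      using lp_dist_bounds Sk_prob[OF P] Sk_prob[OF Q] by blast
    show ?thesis unfolding h_def hausdorff_lp_def
      using hausdorff_bounds[of "S_k M A (Suc k)" "S_k N B (Suc k)" "lp_dist (2 * Suc k)", OF Sk_nonempty Sk_nonempty b] by blast
  qed
  define f where "f k = (1/2) ^ Suc k * h k" for k
  have f0: "0 \<le> f k" for k using hb by (simp add: f_def)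
  have sg: "summable (\<lambda>k. (1/2::real) ^ Suc k)"
    by (simp add: summable_geometric)
  have sf: "summable f"
  proof (rule summable_comparison_test[OF _ sg])
    show "\<exists>N. \<forall>n\<ge>N. norm (f n) \<le> (1/2) ^ Suc n"
      using hb f0 by (auto simp: f_def intro!: exI[of _ 0] mult_left_le)
  qed
  have "sum f {0} \<le> suminf f" by (rule sum_le_suminf[OF sf]) (auto simp: f0)
  moreover have "action_dist M A N B = suminf f"
    unfolding action_dist_def f_def h_def by (rule refl)
  moreover have "f 0 = (1/2) * hausdorff_lp 2 (S_k M A (Suc 0)) (S_k N B (Suc 0))"
    by (simp add: f_def h_def)
  ultimately show ?thesis by simp
qed

lemma approx:
  assumes P: "P_operator M A" and Q: "P_operator N B" and e0: "\<epsilon> > 0"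
    and ad: "action_dist M A N B < \<epsilon> / 2"
    and wm: "w \<in> borel_measurable N" and wb: "\<forall>x\<in>space N. w x \<in> {-1..1}"
  obtains v e where "v \<in> borel_measurable M" "\<forall>x\<in>space M. v x \<in> {-1..1}" "e > 0" "e < \<epsilon>"
    "\<And>S. S \<in> sets (Rn 2) \<Longrightarrow> measure (D M A v) S \<le> measure (D N B w) (thick 2 e S) + e
       \<and> measure (D N B w) S \<le> measure (D M A v) (thick 2 e S) + e"
proof -
  have h: "hausdorff_lp 2 (S_k M A (Suc 0)) (S_k N B (Suc 0)) < \<epsilon>"
    using action_first[OF P Q] ad by simp
  have b: "\<And>x y. x \<in> S_k M A (Suc 0) \<Longrightarrow> y \<in> S_k N B (Suc 0) \<Longrightarrow>
      0 \<le> lp_dist 2 x y \<and> lp_dist 2 x y \<le> 1"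
    using lp_dist_bounds Sk_prob[OF P] Sk_prob[OF Q] by blast
  have y0: "D N B w \<in> S_k N B (Suc 0)" using D_in_S[OF wm wb] .
  obtain \<mu> where mu: "\<mu> \<in> S_k M A (Suc 0)" and d: "lp_dist 2 \<mu> (D N B w) < \<epsilon>"
    using hausdorff_small[of "S_k M A (Suc 0)" "S_k N B (Suc 0)" "lp_dist 2", OF Sk_nonempty Sk_nonempty b h[unfolded hausdorff_lp_def] y0] by blast
  obtain v where vm: "v \<in> borel_measurable M" and vb: "\<forall>x\<in>space M. v x \<in> {-1..1}" and mueq: "\<mu> = D M A v"
    using S_in_D[OF mu] by blast
  have pm: "prob_space \<mu>" using Sk_prob[OF P mu] .
  have pn: "prob_space (D N B w)" using Sk_prob[OF Q y0] .
  obtain e where "e > 0" "e < \<epsilon>" "\<And>S. S \<in> sets (Rn 2) \<Longrightarrow>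
      measure \<mu> S \<le> measure (D N B w) (thick 2 e S) + e \<and> measure (D N B w) S \<le> measure \<mu> (thick 2 e S) + e"
    using lp_dist_less[OF pm pn d] by blast
  then show ?thesis using that[OF vm vb] mueq by blast
qed

lemma thick_sub:
  assumes "z \<in> thick 2 e S"
  shows "z \<in> space (Rn 2) \<and> (\<exists>x\<in>S. \<bar>x 0 - z 0\<bar> < e \<and> \<bar>x 1 - z 1\<bar> < e)"
proof -
  obtain x where z: "z \<in> space (Rn 2)" and x: "x \<in> S" and d: "edist 2 x z < e"
    using assms by (auto simp: thick_def)
  have ed: "edist 2 x z = sqrt ((x 0 - z 0)\<^sup>2 + (x 1 - z 1)\<^sup>2)"
    by (simp add: edist_def numeral_2_eq_2 lessThan_Suc)
  have "\<bar>x 0 - z 0\<bar> = sqrt ((x 0 - z 0)\<^sup>2)" by simp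
  also have "\<dots> \<le> sqrt ((x 0 - z 0)\<^sup>2 + (x 1 - z 1)\<^sup>2)" by (intro real_sqrt_le_mono) simp
  finally have 1: "\<bar>x 0 - z 0\<bar> < e" using d ed by linarith
  have "\<bar>x 1 - z 1\<bar> = sqrt ((x 1 - z 1)\<^sup>2)" by simp
  also have "\<dots> \<le> sqrt ((x 0 - z 0)\<^sup>2 + (x 1 - z 1)\<^sup>2)" by (intro real_sqrt_le_mono) simp
  finally have 2: "\<bar>x 1 - z 1\<bar> < e" using d ed by linarith
  show ?thesis using z x 1 2 by blast
qed

lemma measure_le_sup:
  assumes "finite_measure \<mu>" "T \<subseteq> S" "S \<in> sets \<mu>"
  shows "measure \<mu> T \<le> measure \<mu> S"
proof (cases "T \<in> sets \<mu>")
  case True then show ?thesis using assms finite_measure.finite_measure_mono by blast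
next
  case False then show ?thesis by (simp add: measure_notin_sets)
qed


lemma exists_small:
  assumes "(\<lambda>i. a i :: real) \<longlonglongrightarrow> 0" "\<epsilon> > 0"
  shows "\<exists>i. a i < \<epsilon>"
proof -
  have "eventually (\<lambda>i. a i < \<epsilon>) sequentially" using order_tendstoD(2)[OF assms] .
  then show ?thesis by (auto simp: eventually_sequentially)
qed

lemma get_delta:
  assumes "\<not> (AE x in M. P x)" and "\<And>x. (\<forall>n::nat. Q (1 / real (Suc n)) x) \<Longrightarrow> P x"
  shows "\<exists>n::nat. \<not> (AE x in M. Q (1 / real (Suc n)) x)"
proof (rule ccontr)
  assume "\<not> ?thesis"
  then have "\<forall>n::nat. AE x in M. Q (1 / real (Suc n)) x" by blast
  then have "AE x in M. \<forall>n::nat. Q (1 / real (Suc n)) x" by (simp add: AE_all_countable)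
  then have "AE x in M. P x" by eventually_elim (use assms(2) in blast)
  then show False using assms(1) by blast
qed

lemma arch_small:
  fixes y :: real assumes "y > 0" shows "\<exists>n::nat. 1 / real (Suc n) < y"
proof -
  obtain n :: nat where "inverse (real (Suc n)) < y" using reals_Archimedean[OF assms] by blast
  then show ?thesis by (auto simp: divide_inverse)
qed

lemma pos_measure:
  assumes S: "{x\<in>space M. P x} \<in> sets M" and nae: "\<not> (AE x in M. \<not> P x)"
  shows "measure M {x\<in>space M. P x} > 0 \<or> emeasure M {x\<in>space M. P x} = \<infinity>"
proof -
  have "emeasure M {x\<in>space M. P x} \<noteq> 0"
    using AE_iff_measurable[OF S, of "\<lambda>x. \<not> P x"] nae by simp
  then show ?thesis
    by (cases "emeasure M {x\<in>space M. P x}" rule: ennreal_cases)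
       (auto simp: measure_def less_le)
qed


lemma pos_part:
  fixes M :: "nat \<Rightarrow> 'a measure" and As :: "nat \<Rightarrow> ('a \<Rightarrow> real) \<Rightarrow> 'a \<Rightarrow> real"
    and N :: "'b measure" and A :: "('b \<Rightarrow> real) \<Rightarrow> 'b \<Rightarrow> real"
    and p q :: ennreal and C :: real
  assumes p1: "1 \<le> p" and pf: "p < \<infinity>" and q1: "1 \<le> q"
    and Ps: "\<forall>i. P_operator (M i) (As i)" and P: "P_operator N A"
    and C0: "C > 0" and opC: "\<forall>i. op_norm (M i) (As i) p q \<le> ennreal C"
    and lim: "(\<lambda>i. action_dist (M i) (As i) N A) \<longlonglongrightarrow> 0"
    and pp: "\<forall>i. positivity_preserving (M i) (As i)"
  shows "positivity_preserving N A"
  unfolding positivity_preserving_def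
proof (intro allI impI)
  fix v assume vb: "bounded_meas N v" and vpos: "AE x in N. v x \<ge> 0"
  show "AE x in N. A v x \<ge> 0"
  proof (rule ccontr)
    assume neg: "\<not> (AE x in N. A v x \<ge> 0)"
    interpret PN: prob_space N using Pop_prob[OF P] .
    obtain Cv where Cv: "\<forall>x\<in>space N. \<bar>v x\<bar> \<le> Cv" and vm: "v \<in> borel_measurable N"
      using vb by (auto simp: bounded_meas_def)
    define K where "K = max 1 Cv"
    have K1: "K \<ge> 1" by (simp add: K_def)
    define w where "w x = min 1 (max 0 (v x / K))" for x
    have wm: "w \<in> borel_measurable N" unfolding w_def using vm by measurable
    have w01: "\<forall>x. 0 \<le> w x \<and> w x \<le> 1" by (simp add: w_def)
    have wb: "\<forall>x\<in>space N. w x \<in> {-1..1}" using w01 by (auto intro: order_trans[of _ 0])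
    have wB: "bounded_meas N w" using unit_bounded[OF wm wb] .
    have vKB: "bounded_meas N (\<lambda>y. (1/K) * v y + 0 * v y)"
      unfolding bounded_meas_def
    proof (intro conjI exI[of _ Cv] ballI)
      show "(\<lambda>y. 1 / K * v y + 0 * v y) \<in> borel_measurable N" using vm by measurable
      fix x assume x: "x \<in> space N"
      have "\<bar>v x\<bar> * 1 \<le> \<bar>v x\<bar> * K" using K1 by (intro mult_left_mono) auto
      then have "\<bar>v x\<bar> / K \<le> \<bar>v x\<bar>" using K1 by (simp add: divide_le_eq)
      moreover have "\<bar>v x\<bar> \<le> Cv" using Cv x by blast
      ultimately show "\<bar>1 / K * v x + 0 * v x\<bar> \<le> Cv" using K1 by (simp add: abs_mult)
    qed
    have AEwv: "AE x in N. w x = (1/K) * v x + 0 * v x"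
      using vpos AE_space
    proof eventually_elim
      case (elim x)
      then have "v x \<le> K" using Cv K1 by (auto simp: K_def)
      then have "v x / K \<le> 1" using K1 by (simp add: divide_le_eq)
      then show ?case using elim K1 by (simp add: w_def)
    qed
    have AwAv: "AE x in N. A w x = (1/K) * A v x"
      using Pop_wd[OF P wB vKB AEwv] Pop_lin[OF P vb vb, of "1/K" 0]
      by eventually_elim simp
    define f where "f = A w"
    have fm: "f \<in> borel_measurable N" unfolding f_def using Pop_meas[OF P wB] .
    have negf: "\<not> (AE x in N. f x \<ge> 0)"
    proof
      assume "AE x in N. f x \<ge> 0"
      then have "AE x in N. A v x \<ge> 0" using AwAv
        by eventually_elim (use K1 in \<open>auto simp: f_def zero_le_divide_iff\<close>)
      then show False using neg by blast
    qed
    obtain n :: nat where nd: "\<not> (AE x in N. f x > - (1 / real (Suc n)))"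
    proof -
      have "\<exists>n::nat. \<not> (AE x in N. f x > - (1 / real (Suc n)))"
      proof (rule get_delta[OF negf])
        fix x assume a: "\<forall>n::nat. f x > - (1 / real (Suc n))"
        show "f x \<ge> 0"
        proof (rule ccontr)
          assume "\<not> f x \<ge> 0"
          then obtain m :: nat where "1 / real (Suc m) < - f x" using arch_small[of "- f x"] by auto
          moreover have "- (1 / real (Suc m)) < f x" using a by blast
          ultimately show False by linarith
        qed
      qed
      then show ?thesis using that by blast
    qed
    define \<delta> where "\<delta> = 1 / real (Suc n)"
    have d0: "\<delta> > 0" by (simp add: \<delta>_def)
    define \<eta> where "\<eta> = measure N {x\<in>space N. 0 \<le> w x \<and> f x \<le> - \<delta>}"
    have eta0: "\<eta> > 0"
    proof -
      have S: "{x\<in>space N. 0 \<le> w x \<and> f x \<le> - \<delta>} \<in> sets N" using wm fm by measurable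
      have "\<not> (AE x in N. \<not> (0 \<le> w x \<and> f x \<le> - \<delta>))"
      proof
        assume "AE x in N. \<not> (0 \<le> w x \<and> f x \<le> - \<delta>)"
        then have "AE x in N. f x > - \<delta>" by eventually_elim (use w01 in auto)
        then show False using nd by (simp add: \<delta>_def)
      qed
      from pos_measure[OF S this] show ?thesis
        by (auto simp: \<eta>_def PN.emeasure_eq_measure)
    qed
    obtain \<epsilon>1 where e1: "\<epsilon>1 > 0" and keyR: "\<And>(M'::'a measure) A' g. P_operator M' A' \<Longrightarrow> op_norm M' A' p q \<le> ennreal C \<Longrightarrow>
       g \<in> borel_measurable M' \<Longrightarrow> (\<forall>x\<in>space M'. \<bar>g x\<bar> \<le> 2) \<Longrightarrow>
       measure M' {x\<in>space M'. \<epsilon>1 < \<bar>g x\<bar>} \<le> \<epsilon>1 \<Longrightarrow> measure M' {x\<in>space M'. \<delta>/2 \<le> \<bar>A' g x\<bar>} < \<eta>/2"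
      using key[OF p1 pf q1, of "\<delta>/2" "\<eta>/2" C] d0 eta0 C0 by auto
    define \<epsilon>0 where "\<epsilon>0 = min (\<epsilon>1/2) (min (\<delta>/4) (\<eta>/4))"
    have e00: "\<epsilon>0 > 0" using e1 d0 eta0 by (simp add: \<epsilon>0_def)
    obtain i where adi: "action_dist (M i) (As i) N A < \<epsilon>0 / 2"
      using exists_small[OF lim, of "\<epsilon>0/2"] e00 by auto
    define Mi where "Mi = M i"
    define Ai where "Ai = As i"
    have Pi: "P_operator Mi Ai" using Ps by (simp add: Mi_def Ai_def)
    interpret PM: prob_space Mi using Pop_prob[OF Pi] .
    obtain u0 e where u0m: "u0 \<in> borel_measurable Mi" and u0b: "\<forall>x\<in>space Mi. u0 x \<in> {-1..1}"
      and ep: "e > 0" "e < \<epsilon>0" and LP: "\<And>S. S \<in> sets (Rn 2) \<Longrightarrow>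
        measure (D Mi Ai u0) S \<le> measure (D N A w) (thick 2 e S) + e
       \<and> measure (D N A w) S \<le> measure (D Mi Ai u0) (thick 2 e S) + e"
      using approx[OF Pi P e00 adi[folded Mi_def Ai_def] wm wb] by blast
    have u0B: "bounded_meas Mi u0" using unit_bounded[OF u0m u0b] .
    have pDi: "prob_space (D Mi Ai u0)" using D_prob[OF Pi u0B] .
    have pDN: "prob_space (D N A w)" using D_prob[OF P wB] .
    have S1: "{z\<in>space (Rn 2). z 0 \<le> - \<epsilon>1} \<in> sets (Rn 2)" by measurable
    have T1: "{z\<in>space (Rn 2). z 0 < 0} \<in> sets (Rn 2)" by measurable
    have "thick 2 e {z\<in>space (Rn 2). z 0 \<le> - \<epsilon>1} \<subseteq> {z\<in>space (Rn 2). z 0 < 0}"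
    proof
      fix z assume "z \<in> thick 2 e {z\<in>space (Rn 2). z 0 \<le> - \<epsilon>1}"
      from thick_sub[OF this] obtain x where "z \<in> space (Rn 2)" "x 0 \<le> - \<epsilon>1" "\<bar>x 0 - z 0\<bar> < e" by auto
      then show "z \<in> {z\<in>space (Rn 2). z 0 < 0}" using ep by (auto simp: \<epsilon>0_def)
    qed
    then have "measure (D N A w) (thick 2 e {z\<in>space (Rn 2). z 0 \<le> - \<epsilon>1}) \<le> measure (D N A w) {z\<in>space (Rn 2). z 0 < 0}"
      using measure_le_sup[OF prob_space.finite_measure[OF pDN]] T1 by (simp add: D_def)
    also have "measure (D N A w) {z\<in>space (Rn 2). z 0 < 0} = measure N {x\<in>space N. w x < 0}"
      using D_measure[OF P wB, of "\<lambda>a b. a < 0"] T1 by simp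
    also have "{x\<in>space N. w x < 0} = {}" using w01 by (auto simp: not_less)
    finally have "measure (D N A w) (thick 2 e {z\<in>space (Rn 2). z 0 \<le> - \<epsilon>1}) \<le> 0" by simp
    then have "measure (D Mi Ai u0) {z\<in>space (Rn 2). z 0 \<le> - \<epsilon>1} \<le> e" using LP[OF S1] by linarith
    then have a: "measure Mi {x\<in>space Mi. u0 x \<le> - \<epsilon>1} \<le> e"
      using D_measure[OF Pi u0B, of "\<lambda>a b. a \<le> - \<epsilon>1"] S1 by simp
    have S2: "{z\<in>space (Rn 2). 0 \<le> z 0 \<and> z 1 \<le> - \<delta>} \<in> sets (Rn 2)" by measurable
    have T2: "{z\<in>space (Rn 2). - e < z 0 \<and> z 1 < - \<delta> + e} \<in> sets (Rn 2)" by measurable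
    have "thick 2 e {z\<in>space (Rn 2). 0 \<le> z 0 \<and> z 1 \<le> - \<delta>} \<subseteq> {z\<in>space (Rn 2). - e < z 0 \<and> z 1 < - \<delta> + e}"
    proof
      fix z assume "z \<in> thick 2 e {z\<in>space (Rn 2). 0 \<le> z 0 \<and> z 1 \<le> - \<delta>}"
      note th = thick_sub[OF this]
      then have zs: "z \<in> space (Rn 2)" by blast
      from th obtain x where xS: "x \<in> {z\<in>space (Rn 2). 0 \<le> z 0 \<and> z 1 \<le> - \<delta>}"
        and d1: "\<bar>x 0 - z 0\<bar> < e" and d2: "\<bar>x 1 - z 1\<bar> < e" by blast
      from xS have x1: "0 \<le> x 0" and x2: "x 1 \<le> - \<delta>" by blast+
      have "- e < z 0" using x1 d1 by linarith
      moreover have "z 1 < - \<delta> + e" using x2 d2 by linarith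
      ultimately show "z \<in> {z\<in>space (Rn 2). - e < z 0 \<and> z 1 < - \<delta> + e}" using zs by blast
    qed
    then have "measure (D Mi Ai u0) (thick 2 e {z\<in>space (Rn 2). 0 \<le> z 0 \<and> z 1 \<le> - \<delta>})
        \<le> measure (D Mi Ai u0) {z\<in>space (Rn 2). - e < z 0 \<and> z 1 < - \<delta> + e}"
      using measure_le_sup[OF prob_space.finite_measure[OF pDi]] T2 by (simp add: D_def)
    also have "\<dots> = measure Mi {x\<in>space Mi. - e < u0 x \<and> Ai u0 x < - \<delta> + e}"
      using D_measure[OF Pi u0B, of "\<lambda>a b. - e < a \<and> b < - \<delta> + e"] T2 by simp
    finally have b1: "measure (D Mi Ai u0) (thick 2 e {z\<in>space (Rn 2). 0 \<le> z 0 \<and> z 1 \<le> - \<delta>})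
        \<le> measure Mi {x\<in>space Mi. - e < u0 x \<and> Ai u0 x < - \<delta> + e}" .
    have "measure (D N A w) {z\<in>space (Rn 2). 0 \<le> z 0 \<and> z 1 \<le> - \<delta>} = \<eta>"
      using D_measure[OF P wB, of "\<lambda>a b. 0 \<le> a \<and> b \<le> - \<delta>"] S2 by (simp add: \<eta>_def f_def)
    then have b: "\<eta> \<le> measure Mi {x\<in>space Mi. - e < u0 x \<and> Ai u0 x < - \<delta> + e} + e"
      using LP[OF S2] b1 by linarith
    define g where "g x = max 0 (- u0 x)" for x
    define up where "up x = max 0 (u0 x)" for x
    have gm: "g \<in> borel_measurable Mi" unfolding g_def using u0m by measurable
    have upm: "up \<in> borel_measurable Mi" unfolding up_def using u0m by measurable
    have gb: "\<forall>x\<in>space Mi. \<bar>g x\<bar> \<le> 2" using u0b by (auto simp: g_def)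
    have upb: "\<forall>x\<in>space Mi. up x \<in> {-1..1}" using u0b by (auto simp: up_def)
    have gs: "measure Mi {x\<in>space Mi. \<epsilon>1 < \<bar>g x\<bar>} \<le> \<epsilon>1"
    proof -
      have "measure Mi {x\<in>space Mi. \<epsilon>1 < \<bar>g x\<bar>} \<le> measure Mi {x\<in>space Mi. u0 x \<le> - \<epsilon>1}"
        using e1 by (intro PM.finite_measure_mono) (use u0m in \<open>auto simp: g_def\<close>)
      also have "\<dots> \<le> \<epsilon>1" using a ep by (simp add: \<epsilon>0_def)
      finally show ?thesis .
    qed
    have opCi: "op_norm Mi Ai p q \<le> ennreal C" using opC by (simp add: Mi_def Ai_def)
    have G: "measure Mi {x\<in>space Mi. \<delta>/2 \<le> \<bar>Ai g x\<bar>} < \<eta>/2"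
      using keyR[OF Pi opCi gm gb gs] .
    have gB: "bounded_meas Mi g" using gm gb by (auto simp: bounded_meas_def)
    have upB: "bounded_meas Mi up" using unit_bounded[OF upm upb] .
    have fun_eq: "(\<lambda>y. 1 * up y + (-1) * g y) = u0" by (auto simp: up_def g_def fun_eq_iff)
    have lin: "AE x in Mi. Ai u0 x = 1 * Ai up x + (-1) * Ai g x"
      using Pop_lin[OF Pi upB gB, of 1 "-1"] unfolding fun_eq .
    have ppi: "positivity_preserving Mi Ai" using pp by (simp add: Mi_def Ai_def)
    have upos: "AE x in Mi. Ai up x \<ge> 0"
      using ppi upB unfolding positivity_preserving_def by (auto simp: up_def)
    have Gm: "{x\<in>space Mi. \<delta>/2 \<le> \<bar>Ai g x\<bar>} \<in> sets Mi" using Pop_meas[OF Pi gB] by measurable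
    have "AE x in Mi. x \<in> {x\<in>space Mi. - e < u0 x \<and> Ai u0 x < - \<delta> + e} \<longrightarrow> x \<in> {x\<in>space Mi. \<delta>/2 \<le> \<bar>Ai g x\<bar>}"
      using lin upos
    proof eventually_elim
      case (elim x)
      show ?case
      proof
        assume "x \<in> {x\<in>space Mi. - e < u0 x \<and> Ai u0 x < - \<delta> + e}"
        then have "Ai u0 x < - \<delta> + e" "x \<in> space Mi" by auto
        moreover have "e \<le> \<delta>/2" using ep by (simp add: \<epsilon>0_def)
        ultimately show "x \<in> {x\<in>space Mi. \<delta>/2 \<le> \<bar>Ai g x\<bar>}" using elim by auto
      qed
    qed
    then have "measure Mi {x\<in>space Mi. - e < u0 x \<and> Ai u0 x < - \<delta> + e} \<le> measure Mi {x\<in>space Mi. \<delta>/2 \<le> \<bar>Ai g x\<bar>}"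
      by (intro PM.finite_measure_mono_AE Gm) auto
    with b G have "\<eta> < \<eta>/2 + e" by linarith
    moreover have "e \<le> \<eta>/4" using ep by (simp add: \<epsilon>0_def)
    ultimately show False using eta0 by linarith
  qed
qed


lemma reg_part:
  fixes M :: "nat \<Rightarrow> 'a measure" and As :: "nat \<Rightarrow> ('a \<Rightarrow> real) \<Rightarrow> 'a \<Rightarrow> real"
    and N :: "'b measure" and A :: "('b \<Rightarrow> real) \<Rightarrow> 'b \<Rightarrow> real"
    and p q :: ennreal and C c :: real
  assumes p1: "1 \<le> p" and pf: "p < \<infinity>" and q1: "1 \<le> q"
    and Ps: "\<forall>i. P_operator (M i) (As i)" and P: "P_operator N A"
    and C0: "C > 0" and opC: "\<forall>i. op_norm (M i) (As i) p q \<le> ennreal C"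
    and lim: "(\<lambda>i. action_dist (M i) (As i) N A) \<longlonglongrightarrow> 0"
    and cr: "\<forall>i. c_regular c (M i) (As i)"
  shows "c_regular c N A"
  unfolding c_regular_def
proof (rule ccontr)
  assume neg: "\<not> (AE x in N. A (\<lambda>_. 1) x = c)"
  interpret PN: prob_space N using Pop_prob[OF P] .
  define w :: "'b \<Rightarrow> real" where "w = (\<lambda>_. 1)"
  have wm: "w \<in> borel_measurable N" unfolding w_def by simp
  have wb: "\<forall>x\<in>space N. w x \<in> {-1..1}" by (simp add: w_def)
  have wB: "bounded_meas N w" using unit_bounded[OF wm wb] .
  define f where "f = A w"
  have fm: "f \<in> borel_measurable N" unfolding f_def using Pop_meas[OF P wB] .
  have negf: "\<not> (AE x in N. f x = c)" using neg by (simp add: f_def w_def)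
  obtain n :: nat where nd: "\<not> (AE x in N. \<bar>f x - c\<bar> < 1 / real (Suc n))"
  proof -
    have "\<exists>n::nat. \<not> (AE x in N. \<bar>f x - c\<bar> < 1 / real (Suc n))"
    proof (rule get_delta[OF negf])
      fix x assume a: "\<forall>n::nat. \<bar>f x - c\<bar> < 1 / real (Suc n)"
      show "f x = c"
      proof (rule ccontr)
        assume "f x \<noteq> c"
        then have "\<bar>f x - c\<bar> > 0" by simp
        then obtain m :: nat where "1 / real (Suc m) < \<bar>f x - c\<bar>" using arch_small by blast
        moreover have "\<bar>f x - c\<bar> < 1 / real (Suc m)" using a by blast
        ultimately show False by linarith
      qed
    qed
    then show ?thesis using that by blast
  qed
  define \<delta> where "\<delta> = 1 / real (Suc n)"
  have d0: "\<delta> > 0" by (simp add: \<delta>_def)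
  define \<eta> where "\<eta> = measure N {x\<in>space N. \<delta> \<le> \<bar>f x - c\<bar>}"
  have eta0: "\<eta> > 0"
  proof -
    have S: "{x\<in>space N. \<delta> \<le> \<bar>f x - c\<bar>} \<in> sets N" using fm by measurable
    have "\<not> (AE x in N. \<not> (\<delta> \<le> \<bar>f x - c\<bar>))"
    proof
      assume "AE x in N. \<not> (\<delta> \<le> \<bar>f x - c\<bar>)"
      then have "AE x in N. \<bar>f x - c\<bar> < \<delta>" by eventually_elim auto
      then show False using nd by (simp add: \<delta>_def)
    qed
    from pos_measure[OF S this] show ?thesis
      by (auto simp: \<eta>_def PN.emeasure_eq_measure)
  qed
  obtain \<epsilon>1 where e1: "\<epsilon>1 > 0" and keyR: "\<And>(M'::'a measure) A' g. P_operator M' A' \<Longrightarrow> op_norm M' A' p q \<le> ennreal C \<Longrightarrow>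
     g \<in> borel_measurable M' \<Longrightarrow> (\<forall>x\<in>space M'. \<bar>g x\<bar> \<le> 2) \<Longrightarrow>
     measure M' {x\<in>space M'. \<epsilon>1 < \<bar>g x\<bar>} \<le> \<epsilon>1 \<Longrightarrow> measure M' {x\<in>space M'. \<delta>/2 \<le> \<bar>A' g x\<bar>} < \<eta>/2"
    using key[OF p1 pf q1, of "\<delta>/2" "\<eta>/2" C] d0 eta0 C0 by auto
  define \<epsilon>0 where "\<epsilon>0 = min (\<epsilon>1/2) (min (\<delta>/4) (\<eta>/4))"
  have e00: "\<epsilon>0 > 0" using e1 d0 eta0 by (simp add: \<epsilon>0_def)
  obtain i where adi: "action_dist (M i) (As i) N A < \<epsilon>0 / 2"
    using exists_small[OF lim, of "\<epsilon>0/2"] e00 by auto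
  define Mi where "Mi = M i"
  define Ai where "Ai = As i"
  have Pi: "P_operator Mi Ai" using Ps by (simp add: Mi_def Ai_def)
  interpret PM: prob_space Mi using Pop_prob[OF Pi] .
  obtain u0 e where u0m: "u0 \<in> borel_measurable Mi" and u0b: "\<forall>x\<in>space Mi. u0 x \<in> {-1..1}"
    and ep: "e > 0" "e < \<epsilon>0" and LP: "\<And>S. S \<in> sets (Rn 2) \<Longrightarrow>
      measure (D Mi Ai u0) S \<le> measure (D N A w) (thick 2 e S) + e
     \<and> measure (D N A w) S \<le> measure (D Mi Ai u0) (thick 2 e S) + e"
    using approx[OF Pi P e00 adi[folded Mi_def Ai_def] wm wb] by blast
  have u0B: "bounded_meas Mi u0" using unit_bounded[OF u0m u0b] .
  have pDi: "prob_space (D Mi Ai u0)" using D_prob[OF Pi u0B] .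
  have pDN: "prob_space (D N A w)" using D_prob[OF P wB] .
  have S1: "{z\<in>space (Rn 2). z 0 \<le> 1 - \<epsilon>1} \<in> sets (Rn 2)" by measurable
  have T1: "{z\<in>space (Rn 2). z 0 < 1} \<in> sets (Rn 2)" by measurable
  have "thick 2 e {z\<in>space (Rn 2). z 0 \<le> 1 - \<epsilon>1} \<subseteq> {z\<in>space (Rn 2). z 0 < 1}"
  proof
    fix z assume "z \<in> thick 2 e {z\<in>space (Rn 2). z 0 \<le> 1 - \<epsilon>1}"
    note th = thick_sub[OF this]
    then have zs: "z \<in> space (Rn 2)" by blast
    from th obtain x where xS: "x \<in> {z\<in>space (Rn 2). z 0 \<le> 1 - \<epsilon>1}"
      and d1: "\<bar>x 0 - z 0\<bar> < e" by blast
    from xS have x1: "x 0 \<le> 1 - \<epsilon>1" by blast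
    have "e \<le> \<epsilon>1" using ep by (simp add: \<epsilon>0_def)
    then have "z 0 < 1" using x1 d1 by linarith
    then show "z \<in> {z\<in>space (Rn 2). z 0 < 1}" using zs by blast
  qed
  then have "measure (D N A w) (thick 2 e {z\<in>space (Rn 2). z 0 \<le> 1 - \<epsilon>1}) \<le> measure (D N A w) {z\<in>space (Rn 2). z 0 < 1}"
    using measure_le_sup[OF prob_space.finite_measure[OF pDN]] T1 by (simp add: D_def)
  also have "measure (D N A w) {z\<in>space (Rn 2). z 0 < 1} = measure N {x\<in>space N. w x < 1}"
    using D_measure[OF P wB, of "\<lambda>a b. a < 1"] T1 by simp
  also have "{x\<in>space N. w x < 1} = {}" by (auto simp: w_def)
  finally have "measure (D N A w) (thick 2 e {z\<in>space (Rn 2). z 0 \<le> 1 - \<epsilon>1}) \<le> 0" by simp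
  then have "measure (D Mi Ai u0) {z\<in>space (Rn 2). z 0 \<le> 1 - \<epsilon>1} \<le> e" using LP[OF S1] by linarith
  then have a: "measure Mi {x\<in>space Mi. u0 x \<le> 1 - \<epsilon>1} \<le> e"
    using D_measure[OF Pi u0B, of "\<lambda>a b. a \<le> 1 - \<epsilon>1"] S1 by simp
  have S2: "{z\<in>space (Rn 2). \<delta> \<le> \<bar>z 1 - c\<bar>} \<in> sets (Rn 2)" by measurable
  have T2: "{z\<in>space (Rn 2). \<delta> - e < \<bar>z 1 - c\<bar>} \<in> sets (Rn 2)" by measurable
  have "thick 2 e {z\<in>space (Rn 2). \<delta> \<le> \<bar>z 1 - c\<bar>} \<subseteq> {z\<in>space (Rn 2). \<delta> - e < \<bar>z 1 - c\<bar>}"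
  proof
    fix z assume "z \<in> thick 2 e {z\<in>space (Rn 2). \<delta> \<le> \<bar>z 1 - c\<bar>}"
    note th = thick_sub[OF this]
    then have zs: "z \<in> space (Rn 2)" by blast
    from th obtain x where xS: "x \<in> {z\<in>space (Rn 2). \<delta> \<le> \<bar>z 1 - c\<bar>}"
      and d2: "\<bar>x 1 - z 1\<bar> < e" by blast
    from xS have x2: "\<delta> \<le> \<bar>x 1 - c\<bar>" by blast
    have "\<delta> - e < \<bar>z 1 - c\<bar>" using x2 d2 by linarith
    then show "z \<in> {z\<in>space (Rn 2). \<delta> - e < \<bar>z 1 - c\<bar>}" using zs by blast
  qed
  then have "measure (D Mi Ai u0) (thick 2 e {z\<in>space (Rn 2). \<delta> \<le> \<bar>z 1 - c\<bar>})
      \<le> measure (D Mi Ai u0) {z\<in>space (Rn 2). \<delta> - e < \<bar>z 1 - c\<bar>}"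
    using measure_le_sup[OF prob_space.finite_measure[OF pDi]] T2 by (simp add: D_def)
  also have "\<dots> = measure Mi {x\<in>space Mi. \<delta> - e < \<bar>Ai u0 x - c\<bar>}"
    using D_measure[OF Pi u0B, of "\<lambda>a b. \<delta> - e < \<bar>b - c\<bar>"] T2 by simp
  finally have b1: "measure (D Mi Ai u0) (thick 2 e {z\<in>space (Rn 2). \<delta> \<le> \<bar>z 1 - c\<bar>})
      \<le> measure Mi {x\<in>space Mi. \<delta> - e < \<bar>Ai u0 x - c\<bar>}" .
  have "measure (D N A w) {z\<in>space (Rn 2). \<delta> \<le> \<bar>z 1 - c\<bar>} = \<eta>"
    using D_measure[OF P wB, of "\<lambda>a b. \<delta> \<le> \<bar>b - c\<bar>"] S2 by (simp add: \<eta>_def f_def)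
  then have b: "\<eta> \<le> measure Mi {x\<in>space Mi. \<delta> - e < \<bar>Ai u0 x - c\<bar>} + e"
    using LP[OF S2] b1 by linarith
  define g where "g x = 1 - u0 x" for x
  have gm: "g \<in> borel_measurable Mi" unfolding g_def using u0m by measurable
  have gb: "\<forall>x\<in>space Mi. \<bar>g x\<bar> \<le> 2" using u0b by (auto simp: g_def)
  have gs: "measure Mi {x\<in>space Mi. \<epsilon>1 < \<bar>g x\<bar>} \<le> \<epsilon>1"
  proof -
    have "measure Mi {x\<in>space Mi. \<epsilon>1 < \<bar>g x\<bar>} \<le> measure Mi {x\<in>space Mi. u0 x \<le> 1 - \<epsilon>1}"
      using u0b by (intro PM.finite_measure_mono) (use u0m in \<open>auto simp: g_def\<close>)
    also have "\<dots> \<le> \<epsilon>1" using a ep by (simp add: \<epsilon>0_def)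
    finally show ?thesis .
  qed
  have opCi: "op_norm Mi Ai p q \<le> ennreal C" using opC by (simp add: Mi_def Ai_def)
  have G: "measure Mi {x\<in>space Mi. \<delta>/2 \<le> \<bar>Ai g x\<bar>} < \<eta>/2"
    using keyR[OF Pi opCi gm gb gs] .
  have gB: "bounded_meas Mi g" using gm gb by (auto simp: bounded_meas_def)
  have fun_eq: "(\<lambda>y. 1 * 1 + (-1) * g y) = u0" by (auto simp: g_def fun_eq_iff)
  have lin: "AE x in Mi. Ai u0 x = 1 * Ai (\<lambda>_. 1) x + (-1) * Ai g x"
    using Pop_lin[OF Pi bounded_meas_const[of Mi 1] gB, where a=1 and b="-1"] unfolding fun_eq .
  have cri: "AE x in Mi. Ai (\<lambda>_. 1) x = c" using cr unfolding Mi_def Ai_def c_regular_def by blast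
  have Gm: "{x\<in>space Mi. \<delta>/2 \<le> \<bar>Ai g x\<bar>} \<in> sets Mi" using Pop_meas[OF Pi gB] by measurable
  have "AE x in Mi. x \<in> {x\<in>space Mi. \<delta> - e < \<bar>Ai u0 x - c\<bar>} \<longrightarrow> x \<in> {x\<in>space Mi. \<delta>/2 \<le> \<bar>Ai g x\<bar>}"
    using lin cri
  proof eventually_elim
    case (elim x)
    show ?case
    proof
      assume "x \<in> {x\<in>space Mi. \<delta> - e < \<bar>Ai u0 x - c\<bar>}"
      then have "\<delta> - e < \<bar>Ai u0 x - c\<bar>" "x \<in> space Mi" by auto
      moreover have "e \<le> \<delta>/2" using ep by (simp add: \<epsilon>0_def)
      ultimately show "x \<in> {x\<in>space Mi. \<delta>/2 \<le> \<bar>Ai g x\<bar>}" using elim by auto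
    qed
  qed
  then have "measure Mi {x\<in>space Mi. \<delta> - e < \<bar>Ai u0 x - c\<bar>} \<le> measure Mi {x\<in>space Mi. \<delta>/2 \<le> \<bar>Ai g x\<bar>}"
    by (intro PM.finite_measure_mono_AE Gm) auto
  with b G have "\<eta> < \<eta>/2 + e" by linarith
  moreover have "e \<le> \<eta>/4" using ep by (simp add: \<epsilon>0_def)
  ultimately show False using eta0 by linarith
qed

theorem proposition3p4:
  fixes M :: "nat \<Rightarrow> 'a measure" and As :: "nat \<Rightarrow> ('a \<Rightarrow> real) \<Rightarrow> 'a \<Rightarrow> real"
    and N :: "'b measure" and A :: "('b \<Rightarrow> real) \<Rightarrow> 'b \<Rightarrow> real"
    and p q :: ennreal and c :: real
  assumes "1 \<le> p" and "p < \<infinity>" and "1 \<le> q"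
    and "\<forall>i. P_operator (M i) (As i)" and "P_operator N A"
    and "(SUP i. op_norm (M i) (As i) p q) < \<infinity>"
    and "(\<lambda>i. action_dist (M i) (As i) N A) \<longlonglongrightarrow> 0"
  shows "((\<forall>i. positivity_preserving (M i) (As i)) \<longrightarrow> positivity_preserving N A)
       \<and> ((\<forall>i. c_regular c (M i) (As i)) \<longrightarrow> c_regular c N A)"
proof -
  obtain C0 where C0: "(SUP i. op_norm (M i) (As i) p q) = ennreal C0" "C0 \<ge> 0"
    using assms(6) by (cases "(SUP i. op_norm (M i) (As i) p q)" rule: ennreal_cases) auto
  define C where "C = C0 + 1"
  have Cpos: "C > 0" using C0 by (simp add: C_def)
  have opC: "\<forall>i. op_norm (M i) (As i) p q \<le> ennreal C"
  proof
    fix i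
    have "op_norm (M i) (As i) p q \<le> (SUP i. op_norm (M i) (As i) p q)" by (rule SUP_upper) simp
    also have "\<dots> \<le> ennreal C" using C0 by (simp add: C_def)
    finally show "op_norm (M i) (As i) p q \<le> ennreal C" .
  qed
  show ?thesis
    using pos_part[OF assms(1-5) Cpos opC assms(7)] reg_part[OF assms(1-5) Cpos opC assms(7)] by blast
qed

end
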